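(* Let $I,J$ be positive integers, let $a_1,\ldots,a_J\in[0,\infty)^I$ be nonzero vectors, and consider the statistical model in which, for a parameter $\theta=(\theta_1,\ldots,\theta_I)\in(0,\infty)^I$, the observed counts $n_1,\ldots,n_J$ are independent with $n_j\sim\mathrm{Poisson}(\theta\cdot a_j)$, so that the joint probability mass function is $$f_\theta(n_1,\ldots,n_J)=\prod_{j=1}^J\frac{(\theta\cdot a_j)^{n_j}e^{-\theta\cdot a_j}}{n_j!}.$$ Then for any collapsing $\mathcal{C}=\{C_1,\ldots,C_K\}$ of the read types $s_1,\ldots,s_J$, the vector of collapsed counts $n_{\mathcal{C}}=(n_{C_1},\ldots,n_{C_K})$, where $n_{C_k}=\sum_{s_j\in C_k}n_j$, is a sufficient statistic for $\theta$.
   Context: Read type $s_j$ has sampling rate vector $a_j=(a_{1,j},\ldots,a_{I,j})$, and $\theta\cdot a_j=\sum_{i=1}^I\theta_i a_{i,j}$. A collapsing of $s_1,\ldots,s_J$ is a partition $\{C_1,\ldots,C_K\}$ of $\{s_1,\ldots,s_J\}$ into nonempty disjoint categories such that whenever $s_{j_1},s_{j_2}$ lie in the same category, $a_{j_1}=c\,a_{j_2}$ for some real $c>0$. *)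

theory Defs
  imports "HOL-Analysis.Analysis"
begin

definition rate :: "nat \<Rightarrow> (nat \<Rightarrow> nat \<Rightarrow> real) \<Rightarrow> (nat \<Rightarrow> real) \<Rightarrow> nat \<Rightarrow> real" where
  "rate I a \<theta> j = (\<Sum>i<I. \<theta> i * a i j)"

definition poisson_model :: "nat \<Rightarrow> nat \<Rightarrow> (nat \<Rightarrow> nat \<Rightarrow> real) \<Rightarrow> (nat \<Rightarrow> real) \<Rightarrow> (nat \<Rightarrow> nat) \<Rightarrow> real" where
  "poisson_model I J a \<theta> n =
     (\<Prod>j<J. rate I a \<theta> j ^ n j * exp (- rate I a \<theta> j) / fact (n j))"

definition count_space_J :: "nat \<Rightarrow> (nat \<Rightarrow> nat) set" where
  "count_space_J J = {n. \<forall>j\<ge>J. n j = 0}"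

definition param_space :: "nat \<Rightarrow> (nat \<Rightarrow> real) set" where
  "param_space I = {\<theta>. (\<forall>i<I. 0 < \<theta> i) \<and> (\<forall>i\<ge>I. \<theta> i = 0)}"

text \<open>Sufficiency for a discrete model with pmfs f theta on a countable sample space X:
  the conditional distribution of the data given T(data) does not depend on theta, i.e.
  there is h with P_theta(X = x | T = T x) = h x for every theta with P_theta(T = T x) > 0.\<close>
definition sufficient_statistic ::
  "('p \<Rightarrow> 'x \<Rightarrow> real) \<Rightarrow> 'p set \<Rightarrow> 'x set \<Rightarrow> ('x \<Rightarrow> 'y) \<Rightarrow> bool" where
  "sufficient_statistic f \<Theta> X T \<longleftrightarrow>
     (\<exists>h. \<forall>\<theta>\<in>\<Theta>. \<forall>x\<in>X.
        (\<Sum>\<^sub>\<infinity>y\<in>{y\<in>X. T y = T x}. f \<theta> y) > 0 \<longrightarrow>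
        f \<theta> x / (\<Sum>\<^sub>\<infinity>y\<in>{y\<in>X. T y = T x}. f \<theta> y) = h x)"

definition collapsing :: "nat \<Rightarrow> nat \<Rightarrow> (nat \<Rightarrow> nat \<Rightarrow> real) \<Rightarrow> nat set set \<Rightarrow> bool" where
  "collapsing I J a \<C> \<longleftrightarrow>
     \<Union>\<C> = {..<J} \<and> (\<forall>C\<in>\<C>. C \<noteq> {}) \<and>
     (\<forall>C\<in>\<C>. \<forall>D\<in>\<C>. C \<noteq> D \<longrightarrow> C \<inter> D = {}) \<and>
     (\<forall>C\<in>\<C>. \<forall>j1\<in>C. \<forall>j2\<in>C. \<exists>c::real. c > 0 \<and> (\<forall>i<I. a i j1 = c * a i j2))"

definition collapsed_counts :: "nat set set \<Rightarrow> (nat \<Rightarrow> nat) \<Rightarrow> nat set \<Rightarrow> nat" where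
  "collapsed_counts \<C> n = (\<lambda>C. if C \<in> \<C> then (\<Sum>j\<in>C. n j) else 0)"

end

theory Submission
  imports Defs
begin

lemma suff_factor:
  assumes "\<forall>\<theta>\<in>\<Theta>. \<forall>y\<in>X. f \<theta> y = A \<theta> (T y) * (g y :: real)"
  shows "sufficient_statistic f \<Theta> X T"
  unfolding sufficient_statistic_def
proof (intro exI[of _ "\<lambda>x. g x / infsum g {y\<in>X. T y = T x}"] ballI impI)
  fix \<theta> x assume th: "\<theta> \<in> \<Theta>" and x: "x \<in> X"
    and pos: "(\<Sum>\<^sub>\<infinity>y\<in>{y\<in>X. T y = T x}. f \<theta> y) > 0"
  have eq: "(\<Sum>\<^sub>\<infinity>y\<in>{y\<in>X. T y = T x}. f \<theta> y) = A \<theta> (T x) * infsum g {y\<in>X. T y = T x}"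
  proof -
    have "(\<Sum>\<^sub>\<infinity>y\<in>{y\<in>X. T y = T x}. f \<theta> y) = (\<Sum>\<^sub>\<infinity>y\<in>{y\<in>X. T y = T x}. A \<theta> (T x) * g y)"
      by (rule infsum_cong) (use assms th in auto)
    also have "\<dots> = A \<theta> (T x) * infsum g {y\<in>X. T y = T x}"
      by (rule infsum_cmult_right')
    finally show ?thesis .
  qed
  with pos have "A \<theta> (T x) \<noteq> 0" "infsum g {y\<in>X. T y = T x} \<noteq> 0" by auto
  then show "f \<theta> x / (\<Sum>\<^sub>\<infinity>y\<in>{y\<in>X. T y = T x}. f \<theta> y) = g x / infsum g {y\<in>X. T y = T x}"
    using assms th x eq by simp
qed

theorem proposition2:
  fixes I J :: nat and a :: "nat \<Rightarrow> nat \<Rightarrow> real" and \<C> :: "nat set set"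
  assumes "0 < I" and "0 < J"
    and "\<forall>i<I. \<forall>j<J. 0 \<le> a i j"
    and "\<forall>j<J. \<exists>i<I. a i j \<noteq> 0"
    and "collapsing I J a \<C>"
  shows "sufficient_statistic (poisson_model I J a) (param_space I) (count_space_J J)
           (collapsed_counts \<C>)"
proof -
  note col = assms(5)[unfolded collapsing_def]
  have col4: "\<forall>C\<in>\<C>. \<forall>j1\<in>C. \<forall>j2\<in>C. \<exists>c::real. c > 0 \<and> (\<forall>i<I. a i j1 = c * a i j2)"
    using col by (elim conjE)
  define rep where "rep C = (SOME k. k \<in> C)" for C :: "nat set"
  define cc where "cc C j = (SOME c::real. c > 0 \<and> (\<forall>i<I. a i j = c * a i (rep C)))" for C j
  have fin\<C>: "finite \<C>"
    by (metis col finite_UnionD finite_lessThan)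
  have finC: "finite C" if "C \<in> \<C>" for C
    by (metis col that Union_upper finite_lessThan finite_subset)
  have repC: "rep C \<in> C" if "C \<in> \<C>" for C
    unfolding rep_def using col that by (simp add: some_in_eq)
  have rate_eq: "rate I a \<theta> j = cc C j * rate I a \<theta> (rep C)" if "C \<in> \<C>" "j \<in> C" for C j \<theta>
  proof -
    have "\<exists>c::real. c > 0 \<and> (\<forall>i<I. a i j = c * a i (rep C))"
      using col4 that repC[OF that(1)] by blast
    hence "cc C j > 0 \<and> (\<forall>i<I. a i j = cc C j * a i (rep C))"
      unfolding cc_def by (rule someI_ex)
    hence "\<forall>i<I. a i j = cc C j * a i (rep C)" by blast
    hence "(\<Sum>i<I. \<theta> i * a i j) = (\<Sum>i<I. cc C j * (\<theta> i * a i (rep C)))"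
      by (intro sum.cong) auto
    thus ?thesis unfolding rate_def by (simp add: sum_distrib_left)
  qed
  define A where "A \<theta> t = (\<Prod>C\<in>\<C>. rate I a \<theta> (rep C) ^ t C * exp (- (\<Sum>j\<in>C. rate I a \<theta> j)))"
    for \<theta> and t :: "nat set \<Rightarrow> nat"
  define g where "g y = (\<Prod>C\<in>\<C>. \<Prod>j\<in>C. cc C j ^ y j / fact (y j))" for y :: "nat \<Rightarrow> nat"
  have disj: "\<forall>C\<in>\<C>. \<forall>D\<in>\<C>. C \<noteq> D \<longrightarrow> C \<inter> D = {}" using col by blast
  show ?thesis
  proof (rule suff_factor[where A = A and g = g], intro ballI)
    fix \<theta> y
    have "poisson_model I J a \<theta> y = (\<Prod>j\<in>\<Union>\<C>. rate I a \<theta> j ^ y j * exp (- rate I a \<theta> j) / fact (y j))"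
      unfolding poisson_model_def using col by simp
    also have "\<dots> = (\<Prod>C\<in>\<C>. \<Prod>j\<in>C. rate I a \<theta> j ^ y j * exp (- rate I a \<theta> j) / fact (y j))"
      using prod.Union_disjoint[of \<C> "\<lambda>j. rate I a \<theta> j ^ y j * exp (- rate I a \<theta> j) / fact (y j)"] finC disj by (simp add: comp_def)
    also have "\<dots> = (\<Prod>C\<in>\<C>. (rate I a \<theta> (rep C) ^ (\<Sum>j\<in>C. y j) * exp (- (\<Sum>j\<in>C. rate I a \<theta> j)))
                      * (\<Prod>j\<in>C. cc C j ^ y j / fact (y j)))"
    proof (rule prod.cong[OF refl])
      fix C assume C: "C \<in> \<C>"
      have "(\<Prod>j\<in>C. rate I a \<theta> j ^ y j * exp (- rate I a \<theta> j) / fact (y j))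
          = (\<Prod>j\<in>C. rate I a \<theta> (rep C) ^ y j * exp (- rate I a \<theta> j) * (cc C j ^ y j / fact (y j)))"
        proof (rule prod.cong[OF refl])
          fix j assume j: "j \<in> C"
          show "rate I a \<theta> j ^ y j * exp (- rate I a \<theta> j) / fact (y j) = rate I a \<theta> (rep C) ^ y j * exp (- rate I a \<theta> j) * (cc C j ^ y j / fact (y j))"
            unfolding rate_eq[OF C j, of \<theta>] power_mult_distrib by simp
        qed
      also have "\<dots> = (\<Prod>j\<in>C. rate I a \<theta> (rep C) ^ y j) * (\<Prod>j\<in>C. exp (- rate I a \<theta> j))
                     * (\<Prod>j\<in>C. cc C j ^ y j / fact (y j))"
        by (simp only: prod.distrib)
      also have "\<dots> = (rate I a \<theta> (rep C) ^ (\<Sum>j\<in>C. y j) * exp (- (\<Sum>j\<in>C. rate I a \<theta> j)))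
                      * (\<Prod>j\<in>C. cc C j ^ y j / fact (y j))"
      proof -
        have "exp (- (\<Sum>j\<in>C. rate I a \<theta> j)) = (\<Prod>j\<in>C. exp (- rate I a \<theta> j))"
          using finC[OF C] by (simp add: exp_sum[symmetric] sum_negf)
        moreover have "(\<Prod>j\<in>C. rate I a \<theta> (rep C) ^ y j) = rate I a \<theta> (rep C) ^ (\<Sum>j\<in>C. y j)"
          by (simp add: power_sum)
        ultimately show ?thesis by simp
      qed
      finally show "(\<Prod>j\<in>C. rate I a \<theta> j ^ y j * exp (- rate I a \<theta> j) / fact (y j)) = \<dots>" .
    qed
    also have "\<dots> = A \<theta> (collapsed_counts \<C> y) * g y"
      unfolding A_def g_def collapsed_counts_def prod.distrib by simp
    finally show "poisson_model I J a \<theta> y = A \<theta> (collapsed_counts \<C> y) * g y" .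
  qed
qed

end
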